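(* Let $c\in\mathbb{R}$. (1) (Elliptic umbilic $D_4^-$.) Let $\boldsymbol\eta_c(x_1,x_2)=(x_1^2-x_2^2,\,-2x_1x_2+4cx_2)$. If $\mathbf y\in\mathbb{R}^2$ has exactly four preimages $\mathbf x_1,\dots,\mathbf x_4$ under $\boldsymbol\eta_c$, each with $\det[\mathrm{Jac}\,\boldsymbol\eta_c](\mathbf x_i)\ne0$, then $\mu_1+\mu_2+\mu_3+\mu_4=0$. (2) (Hyperbolic umbilic $D_4^+$.) Let $\boldsymbol\eta_c(x_1,x_2)=(x_1^2+2cx_2,\,x_2^2+2cx_1)$. If $\mathbf y\in\mathbb{R}^2$ has exactly four preimages $\mathbf x_1,\dots,\mathbf x_4$ under $\boldsymbol\eta_c$, each with nonvanishing Jacobian determinant, then $\mu_1+\mu_2+\mu_3+\mu_4=0$.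
   Context: The signed magnification of a preimage (lensed image) $\mathbf x_i$ of $\mathbf y$ is $\mu_i=1/\det[\mathrm{Jac}\,\boldsymbol\eta_c](\mathbf x_i)$. The maps above are the quantitative local forms of lensing maps near elliptic and hyperbolic umbilic caustics. *)

theory Defs
  imports "HOL-Analysis.Analysis"
begin

definition jacdet :: "(real^2 \<Rightarrow> real^2) \<Rightarrow> real^2 \<Rightarrow> real" where
  "jacdet f x = det (matrix (frechet_derivative f (at x)))"

definition magnification :: "(real^2 \<Rightarrow> real^2) \<Rightarrow> real^2 \<Rightarrow> real" where
  "magnification f x = 1 / jacdet f x"

definition eta_ell :: "real \<Rightarrow> real^2 \<Rightarrow> real^2" where
  "eta_ell c x = vector [(x$1)^2 - (x$2)^2, -2 * x$1 * x$2 + 4 * c * x$2]"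

definition eta_hyp :: "real \<Rightarrow> real^2 \<Rightarrow> real^2" where
  "eta_hyp c x = vector [(x$1)^2 + 2 * c * x$2, (x$2)^2 + 2 * c * x$1]"

end

theory Submission imports Defs begin
lemma cubic_zero:
  fixes r1 r2 r3 r4 al be ga de :: real
  assumes d: "r1 \<noteq> r2" "r1 \<noteq> r3" "r1 \<noteq> r4" "r2 \<noteq> r3" "r2 \<noteq> r4" "r3 \<noteq> r4"
  and h: "\<And>r. r \<in> {r1,r2,r3,r4} \<Longrightarrow> al*r^3 + be*r^2 + ga*r + de = 0"
  shows "al = 0 \<and> be = 0 \<and> ga = 0 \<and> de = 0"
proof -
  have e: "al*r^3 + be*r^2 + ga*r + de = 0" if "r \<in> {r1,r2,r3,r4}" for r using h that by blast
  have q: "al*(x^2+x*y+y^2) + be*(x+y) + ga = 0" if "x \<in> {r1,r2,r3,r4}" "y \<in> {r1,r2,r3,r4}" "x \<noteq> y" for x y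
  proof -
    have "(x - y) * (al*(x^2+x*y+y^2) + be*(x+y) + ga) = (al*x^3 + be*x^2 + ga*x + de) - (al*y^3 + be*y^2 + ga*y + de)"
      by (simp add: algebra_simps power2_eq_square power3_eq_cube)
    also have "\<dots> = 0" using e[OF that(1)] e[OF that(2)] by simp
    finally show ?thesis using that(3) by simp
  qed
  have l: "al*(x+y+z) + be = 0" if "x \<in> {r1,r2,r3,r4}" "y \<in> {r1,r2,r3,r4}" "z \<in> {r1,r2,r3,r4}" "x \<noteq> y" "x \<noteq> z" "y \<noteq> z" for x y z
  proof -
    have "(y - z) * (al*(x+y+z) + be) = (al*(x^2+x*y+y^2) + be*(x+y) + ga) - (al*(x^2+x*z+z^2) + be*(x+z) + ga)"
      by (simp add: algebra_simps power2_eq_square)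
    also have "\<dots> = 0" using q[of x y] q[of x z] that by simp
    finally show ?thesis using that by simp
  qed
  have "(r4 - r3) * al = (al*(r1+r2+r4) + be) - (al*(r1+r2+r3) + be)" by (simp add: algebra_simps)
  also have "\<dots> = 0" using l[of r1 r2 r4] l[of r1 r2 r3] d by simp
  finally have a0: "al = 0" using d by simp
  have b0: "be = 0" using l[of r1 r2 r3] d a0 by simp
  have g0: "ga = 0" using q[of r1 r2] d a0 b0 by simp
  have "de = 0" using e[of r1] a0 b0 g0 by simp
  with a0 b0 g0 show ?thesis by simp
qed

lemma vieta4:
  fixes r1 r2 r3 r4 A B C D :: real
  assumes d: "r1 \<noteq> r2" "r1 \<noteq> r3" "r1 \<noteq> r4" "r2 \<noteq> r3" "r2 \<noteq> r4" "r3 \<noteq> r4"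
  and h: "\<And>r. r \<in> {r1,r2,r3,r4} \<Longrightarrow> r^4 + A*r^3 + B*r^2 + C*r + D = 0"
  shows "A = -(r1+r2+r3+r4) \<and> B = r1*r2+r1*r3+r1*r4+r2*r3+r2*r4+r3*r4
     \<and> C = -(r1*r2*r3+r1*r2*r4+r1*r3*r4+r2*r3*r4) \<and> D = r1*r2*r3*r4"
proof -
  let ?al = "A + (r1+r2+r3+r4)" and ?be = "B - (r1*r2+r1*r3+r1*r4+r2*r3+r2*r4+r3*r4)"
  and ?ga = "C + (r1*r2*r3+r1*r2*r4+r1*r3*r4+r2*r3*r4)" and ?de = "D - r1*r2*r3*r4"
  have "?al = 0 \<and> ?be = 0 \<and> ?ga = 0 \<and> ?de = 0"
  proof (rule cubic_zero[OF d])
    fix r assume r: "r \<in> {r1,r2,r3,r4}"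
    have "(r-r1)*(r-r2)*(r-r3)*(r-r4) = 0" using r by auto
    moreover have "?al*r^3 + ?be*r^2 + ?ga*r + ?de = (r^4 + A*r^3 + B*r^2 + C*r + D) - (r-r1)*(r-r2)*(r-r3)*(r-r4)"
      by (simp add: algebra_simps power2_eq_square power3_eq_cube power4_eq_xxxx)
    ultimately show "?al*r^3 + ?be*r^2 + ?ga*r + ?de = 0" using h[OF r] by simp
  qed
  then show ?thesis by (simp add: algebra_simps)
qed

lemma lagr:
  fixes r1 r2 r3 r4 u v :: real
  assumes d: "r1 \<noteq> r2" "r1 \<noteq> r3" "r1 \<noteq> r4" "r2 \<noteq> r3" "r2 \<noteq> r4" "r3 \<noteq> r4"
  shows "(u*r1+v)/((r1-r2)*(r1-r3)*(r1-r4)) + (u*r2+v)/((r2-r1)*(r2-r3)*(r2-r4))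
       + (u*r3+v)/((r3-r1)*(r3-r2)*(r3-r4)) + (u*r4+v)/((r4-r1)*(r4-r2)*(r4-r3)) = 0"
proof -
  have n: "r1 - r2 \<noteq> 0" "r1 - r3 \<noteq> 0" "r1 - r4 \<noteq> 0" "r2 - r3 \<noteq> 0" "r2 - r4 \<noteq> 0" "r3 - r4 \<noteq> 0"
    "r2 - r1 \<noteq> 0" "r3 - r1 \<noteq> 0" "r4 - r1 \<noteq> 0" "r3 - r2 \<noteq> 0" "r4 - r2 \<noteq> 0" "r4 - r3 \<noteq> 0" using d by auto
  define De where "De = (r1-r2)*(r1-r3)*(r1-r4)*(r2-r3)*(r2-r4)*(r3-r4)"
  have De: "De \<noteq> 0" using n unfolding De_def by simp
  have t1: "(u*r1+v)/((r1-r2)*(r1-r3)*(r1-r4)) = (u*r1+v)*((r2-r3)*(r2-r4)*(r3-r4))/De"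
    apply (subst frac_eq_eq) using n apply simp using De apply simp unfolding De_def by algebra
  have t2: "(u*r2+v)/((r2-r1)*(r2-r3)*(r2-r4)) = - (u*r2+v)*((r1-r3)*(r1-r4)*(r3-r4))/De"
    apply (subst frac_eq_eq) using n apply simp using De apply simp unfolding De_def by algebra
  have t3: "(u*r3+v)/((r3-r1)*(r3-r2)*(r3-r4)) = (u*r3+v)*((r1-r2)*(r1-r4)*(r2-r4))/De"
    apply (subst frac_eq_eq) using n apply simp using De apply simp unfolding De_def by algebra
  have t4: "(u*r4+v)/((r4-r1)*(r4-r2)*(r4-r3)) = - (u*r4+v)*((r1-r2)*(r1-r3)*(r2-r3))/De"
    apply (subst frac_eq_eq) using n apply simp using De apply simp unfolding De_def by algebra
  show ?thesis unfolding t1 t2 t3 t4 using De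
    by (simp add: add_divide_distrib[symmetric] diff_divide_distrib[symmetric]) (simp add: algebra_simps)
qed
lemma card4: "card S = 4 \<Longrightarrow> \<exists>p0 p1 p2 p3. S = {p0,p1,p2,p3} \<and> p0\<noteq>p1 \<and> p0\<noteq>p2 \<and> p0\<noteq>p3 \<and> p1\<noteq>p2 \<and> p1\<noteq>p3 \<and> p2\<noteq>p3"
  by (auto simp: card_Suc_eq numeral_eq_Suc)

lemma generic:
 fixes S :: "(real^2) set" and g :: "real^2 \<Rightarrow> real"
 assumes card: "card S = 4"
 and inj: "inj_on (\<lambda>x. x$1) S"
 and quart: "\<forall>x\<in>S. (x$1)^4 + A*(x$1)^3 + B*(x$1)^2 + C*(x$1) + D = 0"
 and mag: "\<forall>x\<in>S. g x * (4*(x$1)^3 + 3*A*(x$1)^2 + 2*B*(x$1) + C) = u*(x$1) + v"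
 shows "(\<Sum>x\<in>S. g x) = 0"
proof -
  obtain p0 p1 p2 p3 where S: "S = {p0,p1,p2,p3}" and dp: "p0\<noteq>p1" "p0\<noteq>p2" "p0\<noteq>p3" "p1\<noteq>p2" "p1\<noteq>p3" "p2\<noteq>p3"
    using card4[OF card] by blast
  define r1 where "r1 = p0$1"
  define r2 where "r2 = p1$1"
  define r3 where "r3 = p2$1"
  define r4 where "r4 = p3$1"
  have d: "r1 \<noteq> r2" "r1 \<noteq> r3" "r1 \<noteq> r4" "r2 \<noteq> r3" "r2 \<noteq> r4" "r3 \<noteq> r4"
    using inj dp unfolding S r1_def r2_def r3_def r4_def inj_on_def by blast+
  have "\<And>r. r \<in> {r1,r2,r3,r4} \<Longrightarrow> r^4 + A*r^3 + B*r^2 + C*r + D = 0"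
    using quart unfolding S r1_def r2_def r3_def r4_def by auto
  from vieta4[OF d this] have V: "A = -(r1+r2+r3+r4)" "B = r1*r2+r1*r3+r1*r4+r2*r3+r2*r4+r3*r4"
     "C = -(r1*r2*r3+r1*r2*r4+r1*r3*r4+r2*r3*r4)" by auto
  have P: "4*r1^3 + 3*A*r1^2 + 2*B*r1 + C = (r1-r2)*(r1-r3)*(r1-r4)"
    "4*r2^3 + 3*A*r2^2 + 2*B*r2 + C = (r2-r1)*(r2-r3)*(r2-r4)"
    "4*r3^3 + 3*A*r3^2 + 2*B*r3 + C = (r3-r1)*(r3-r2)*(r3-r4)"
    "4*r4^3 + 3*A*r4^2 + 2*B*r4 + C = (r4-r1)*(r4-r2)*(r4-r3)"
    unfolding V by (simp_all add: algebra_simps power2_eq_square power3_eq_cube)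
  have nz: "(r1-r2)*(r1-r3)*(r1-r4) \<noteq> 0" "(r2-r1)*(r2-r3)*(r2-r4) \<noteq> 0"
    "(r3-r1)*(r3-r2)*(r3-r4) \<noteq> 0" "(r4-r1)*(r4-r2)*(r4-r3) \<noteq> 0" using d by auto
  have g: "g p0 = (u*r1+v)/((r1-r2)*(r1-r3)*(r1-r4))" "g p1 = (u*r2+v)/((r2-r1)*(r2-r3)*(r2-r4))"
    "g p2 = (u*r3+v)/((r3-r1)*(r3-r2)*(r3-r4))" "g p3 = (u*r4+v)/((r4-r1)*(r4-r2)*(r4-r3))"
    using mag nz P unfolding S r1_def r2_def r3_def r4_def by (auto simp: eq_divide_eq)
  have "(\<Sum>x\<in>S. g x) = g p0 + g p1 + g p2 + g p3" unfolding S using dp by simp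
  also have "\<dots> = 0" unfolding g by (rule lagr[OF d])
  finally show ?thesis .
qed
lemma vec2_eq: "(vector [u, v] :: real^2) = u *\<^sub>R axis 1 1 + v *\<^sub>R axis 2 1"
  by (simp add: vec_eq_iff forall_2 axis_def)
lemma nth_deriv: "((\<lambda>x::real^2. x $ i) has_derivative (\<lambda>h. h $ i)) F"
  by (rule bounded_linear.has_derivative[OF bounded_linear_vec_nth has_derivative_ident])
lemma deriv_ell: "(eta_ell c has_derivative (\<lambda>h. vector [2*x$1*h$1 - 2*x$2*h$2, -2*x$2*h$1 + (4*c - 2*x$1)*h$2])) (at x)"
  unfolding eta_ell_def[abs_def] vec2_eq
  by (rule derivative_eq_intros nth_deriv refl | simp)+ (auto simp: algebra_simps)
lemma jac_ell: "jacdet (eta_ell c) x = -4*(x$1)^2 + 8*c*x$1 - 4*(x$2)^2"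
  unfolding jacdet_def frechet_derivative_at[OF deriv_ell, symmetric]
  by (simp add: det_2 matrix_def axis_def power2_eq_square algebra_simps)
lemma deriv_hyp: "(eta_hyp c has_derivative (\<lambda>h. vector [2*x$1*h$1 + 2*c*h$2, 2*c*h$1 + 2*x$2*h$2])) (at x)"
  unfolding eta_hyp_def[abs_def] vec2_eq
  by (rule derivative_eq_intros nth_deriv refl | simp)+ (auto simp: algebra_simps)
lemma jac_hyp: "jacdet (eta_hyp c) x = 4*(x$1*x$2 - c^2)"
  unfolding jacdet_def frechet_derivative_at[OF deriv_hyp, symmetric]
  by (simp add: det_2 matrix_def axis_def power2_eq_square algebra_simps)

lemma mem_ell: "eta_ell c x = y \<longleftrightarrow> (x$1)^2 - (x$2)^2 = y$1 \<and> -2*x$1*x$2 + 4*c*x$2 = y$2"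
  by (auto simp: eta_ell_def vec_eq_iff forall_2)
lemma mem_hyp: "eta_hyp c x = y \<longleftrightarrow> (x$1)^2 + 2*c*x$2 = y$1 \<and> (x$2)^2 + 2*c*x$1 = y$2"
  by (auto simp: eta_hyp_def vec_eq_iff forall_2)
lemma vec2_ext: "(x::real^2)$1 = z$1 \<Longrightarrow> x$2 = z$2 \<Longrightarrow> x = z"
  by (simp add: vec_eq_iff forall_2)

lemma ell_gen:
  assumes card: "card {x. eta_ell c x = y} = 4" and J: "\<forall>x\<in>{x. eta_ell c x = y}. jacdet (eta_ell c) x \<noteq> 0"
  and b: "y$2 \<noteq> 0"
  shows "(\<Sum>x\<in>{x. eta_ell c x = y}. magnification (eta_ell c) x) = 0"
proof (rule generic[OF card, where A="-4*c" and B="4*c^2 - y$1" and C="4*y$1*c"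
      and D="-4*y$1*c^2 - (y$2)^2/4" and u="-1/2" and v=c])
  show "inj_on (\<lambda>x. x$1) {x. eta_ell c x = y}"
  proof (rule inj_onI)
    fix x z assume "x \<in> {x. eta_ell c x = y}" "z \<in> {x. eta_ell c x = y}" and e: "x$1 = z$1"
    then have h: "-2*x$1*x$2 + 4*c*x$2 = y$2" "-2*x$1*z$2 + 4*c*z$2 = y$2" by (auto simp: mem_ell)
    have "(x$2 - z$2) * (-2*x$1 + 4*c) = 0" using h by (simp add: algebra_simps)
    moreover have "-2*x$1 + 4*c \<noteq> 0"
    proof
      assume "-2*x$1 + 4*c = 0"
      then have x1: "x$1 = 2*c" by simp
      have "y$2 = 0" using h(1) unfolding x1 by (simp add: algebra_simps)
      with b show False by simp
    qed
    ultimately show "x = z" using e by (intro vec2_ext) auto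
  qed
  show "\<forall>x\<in>{x. eta_ell c x = y}. (x$1)^4 + (-4*c)*(x$1)^3 + (4*c^2 - y$1)*(x$1)^2 + (4*y$1*c)*(x$1) + (-4*y$1*c^2 - (y$2)^2/4) = 0"
  proof
    fix x assume "x \<in> {x. eta_ell c x = y}"
    then have h: "y$1 = (x$1)^2 - (x$2)^2" "y$2 = -2*x$1*x$2 + 4*c*x$2" by (auto simp: mem_ell)
    show "(x$1)^4 + (-4*c)*(x$1)^3 + (4*c^2 - y$1)*(x$1)^2 + (4*y$1*c)*(x$1) + (-4*y$1*c^2 - (y$2)^2/4) = 0"
      unfolding h by (simp add: field_simps power2_eq_square power3_eq_cube power4_eq_xxxx)
  qed
  show "\<forall>x\<in>{x. eta_ell c x = y}. magnification (eta_ell c) x * (4*(x$1)^3 + 3*(-4*c)*(x$1)^2 + 2*(4*c^2 - y$1)*(x$1) + 4*y$1*c) = (-1/2)*(x$1) + c"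
  proof
    fix x assume x: "x \<in> {x. eta_ell c x = y}"
    then have h: "y$1 = (x$1)^2 - (x$2)^2" by (auto simp: mem_ell)
    have Jx: "jacdet (eta_ell c) x \<noteq> 0" using J x by blast
    have "4*(x$1)^3 + 3*(-4*c)*(x$1)^2 + 2*(4*c^2 - y$1)*(x$1) + 4*y$1*c = jacdet (eta_ell c) x * ((-1/2)*(x$1) + c)"
      unfolding jac_ell h by (simp add: algebra_simps power2_eq_square power3_eq_cube)
    then show "magnification (eta_ell c) x * (4*(x$1)^3 + 3*(-4*c)*(x$1)^2 + 2*(4*c^2 - y$1)*(x$1) + 4*y$1*c) = (-1/2)*(x$1) + c"
      using Jx by (simp add: magnification_def)
  qed
qed

lemma hyp_gen:
  assumes card: "card {x. eta_hyp c x = y} = 4" and J: "\<forall>x\<in>{x. eta_hyp c x = y}. jacdet (eta_hyp c) x \<noteq> 0"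
  and c: "c \<noteq> 0"
  shows "(\<Sum>x\<in>{x. eta_hyp c x = y}. magnification (eta_hyp c) x) = 0"
proof (rule generic[OF card, where A=0 and B="-2*y$1" and C="8*c^3"
      and D="(y$1)^2 - 4*y$2*c^2" and u=0 and v="-2*c"])
  show "inj_on (\<lambda>x. x$1) {x. eta_hyp c x = y}"
  proof (rule inj_onI)
    fix x z assume "x \<in> {x. eta_hyp c x = y}" "z \<in> {x. eta_hyp c x = y}" and e: "x$1 = z$1"
    then have h: "(x$1)^2 + 2*c*x$2 = y$1" "(x$1)^2 + 2*c*z$2 = y$1" by (auto simp: mem_hyp)
    have "2*c*x$2 = 2*c*z$2" using h by linarith
    then show "x = z" using e c by (intro vec2_ext) auto
  qed
  show "\<forall>x\<in>{x. eta_hyp c x = y}. (x$1)^4 + 0*(x$1)^3 + (-2*y$1)*(x$1)^2 + (8*c^3)*(x$1) + ((y$1)^2 - 4*y$2*c^2) = 0"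
  proof
    fix x assume "x \<in> {x. eta_hyp c x = y}"
    then have h: "y$1 = (x$1)^2 + 2*c*x$2" "y$2 = (x$2)^2 + 2*c*x$1" by (auto simp: mem_hyp)
    show "(x$1)^4 + 0*(x$1)^3 + (-2*y$1)*(x$1)^2 + (8*c^3)*(x$1) + ((y$1)^2 - 4*y$2*c^2) = 0"
      unfolding h by (simp add: algebra_simps power2_eq_square power3_eq_cube power4_eq_xxxx)
  qed
  show "\<forall>x\<in>{x. eta_hyp c x = y}. magnification (eta_hyp c) x * (4*(x$1)^3 + 3*0*(x$1)^2 + 2*(-2*y$1)*(x$1) + 8*c^3) = 0*(x$1) + -2*c"
  proof
    fix x assume x: "x \<in> {x. eta_hyp c x = y}"
    then have h: "y$1 = (x$1)^2 + 2*c*x$2" by (auto simp: mem_hyp)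
    have Jx: "jacdet (eta_hyp c) x \<noteq> 0" using J x by blast
    have "4*(x$1)^3 + 3*0*(x$1)^2 + 2*(-2*y$1)*(x$1) + 8*c^3 = jacdet (eta_hyp c) x * (-2*c)"
      unfolding jac_hyp h by (simp add: algebra_simps power2_eq_square power3_eq_cube)
    then show "magnification (eta_hyp c) x * (4*(x$1)^3 + 3*0*(x$1)^2 + 2*(-2*y$1)*(x$1) + 8*c^3) = 0*(x$1) + -2*c"
      using Jx by (simp add: magnification_def)
  qed
qed

lemma hyp_deg:
  shows "(\<Sum>x\<in>{x. eta_hyp 0 x = y}. magnification (eta_hyp 0) x) = 0"
proof -
  let ?S = "{x. eta_hyp 0 x = y}"
  define s where "s = (\<lambda>x::real^2. vector [-(x$1), x$2] :: real^2)"
  have ss: "s (s x) = x" for x by (simp add: s_def vec_eq_iff forall_2)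
  have sS: "s x \<in> ?S" if "x \<in> ?S" for x using that by (simp add: s_def mem_hyp)
  have sP: "s \<in> ?S \<rightarrow> ?S" using sS by (simp only: Pi_iff) blast
  have bij: "bij_betw s ?S ?S"
    by (rule bij_betwI[OF sP sP]) (simp_all add: ss)
  have m: "magnification (eta_hyp 0) (s x) = - magnification (eta_hyp 0) x" for x
    by (simp add: magnification_def jac_hyp s_def)
  have "(\<Sum>x\<in>?S. magnification (eta_hyp 0) x) = (\<Sum>x\<in>?S. magnification (eta_hyp 0) (s x))"
    using sum.reindex_bij_betw[OF bij, of "magnification (eta_hyp 0)"] by simp
  also have "\<dots> = - (\<Sum>x\<in>?S. magnification (eta_hyp 0) x)" by (simp add: m sum_negf)
  finally show ?thesis by simp
qed

lemma sq_cases: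
  assumes h: "(t::real)^2 = a" shows "t = sqrt a \<or> t = - sqrt a"
proof -
  have "sqrt a = \<bar>t\<bar>" using h real_sqrt_abs[of t] by simp
  then show ?thesis by (cases "t \<ge> 0") auto
qed

lemma card2_le: "card {p, q} \<le> 2" by (simp add: card_insert_if)

lemma aux: fixes r X Y :: real
  assumes n: "r\<noteq>0" "X\<noteq>0" "Y\<noteq>0" and e: "Y - X = 2*r"
  shows "1/(4*r*X) + 1/(-4*r*Y) + 2*(1/(-4*X*Y)) = 0"
proof -
  have D: "4*r*X*Y \<noteq> 0" using n by simp
  have t1: "1/(4*r*X) = Y/(4*r*X*Y)" using n by simp
  have t2: "1/(-4*r*Y) = (-X)/(4*r*X*Y)" using n by simp
  have t3: "2*(1/(-4*X*Y)) = (-2*r)/(4*r*X*Y)" using n by simp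
  have "1/(4*r*X) + 1/(-4*r*Y) + 2*(1/(-4*X*Y)) = (Y - X - 2*r)/(4*r*X*Y)"
    unfolding t1 t2 t3 add_divide_distrib[symmetric] by simp
  then show ?thesis using e by simp
qed

lemma ell_deg:
  assumes card: "card {x. eta_ell c x = y} = 4" and b: "y$2 = 0"
  shows "(\<Sum>x\<in>{x. eta_ell c x = y}. magnification (eta_ell c) x) = 0"
proof -
  let ?S = "{x. eta_ell c x = y}"
  define a where "a = y$1"
  define A where "A = {x\<in>?S. x$2 = 0}"
  define B where "B = {x\<in>?S. x$2 \<noteq> 0}"
  define w where "w = sqrt (4*c^2 - a)"
  define P where "P = (vector [sqrt a, 0] :: real^2)"
  define Q where "Q = (vector [- sqrt a, 0] :: real^2)"
  define P' where "P' = (vector [2*c, w] :: real^2)"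
  define Q' where "Q' = (vector [2*c, -w] :: real^2)"
  have fin: "finite ?S" using card by (metis card.infinite zero_neq_numeral)
  have SAB: "?S = A \<union> B" and dis: "A \<inter> B = {}" unfolding A_def B_def by auto
  have fA: "finite A" and fB: "finite B" using fin unfolding A_def B_def by auto
  have AS: "A \<subseteq> {P, Q}"
  proof
    fix x assume "x \<in> A"
    then have h: "(x$1)^2 = a" "x$2 = 0" unfolding A_def a_def by (auto simp: mem_ell)
    from sq_cases[OF h(1)] show "x \<in> {P, Q}" using h(2) unfolding P_def Q_def
      by (auto intro!: vec2_ext)
  qed
  have BS: "B \<subseteq> {P', Q'}"
  proof
    fix x assume "x \<in> B"
    then have h: "(x$1)^2 - (x$2)^2 = a" "x$2 * (x$1 - 2*c) = 0" "x$2 \<noteq> 0"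
      unfolding B_def a_def using b by (auto simp: mem_ell algebra_simps)
    then have h1: "x$1 = 2*c" by simp
    with h have "(x$2)^2 = 4*c^2 - a" by (simp add: power_mult_distrib)
    from sq_cases[OF this] show "x \<in> {P', Q'}" using h1 unfolding P'_def Q'_def w_def
      by (auto intro!: vec2_ext)
  qed
  have cA: "card A \<le> 2" using card_mono[OF _ AS] card2_le[of P Q] by simp
  have cB: "card B \<le> 2" using card_mono[OF _ BS] card2_le[of P' Q'] by simp
  have "card A + card B = 4" using card card_Un_disjoint[OF fA fB dis] SAB by simp
  then have cA2: "card A = 2" and cB2: "card B = 2" using cA cB by auto
  have cPQ: "card {P, Q} = 2" using card_mono[OF _ AS] card2_le[of P Q] cA2 by simp
  have cPQ': "card {P', Q'} = 2" using card_mono[OF _ BS] card2_le[of P' Q'] cB2 by simp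
  have AE: "A = {P, Q}" using card_subset_eq[OF _ AS] cPQ cA2 by simp
  have BE: "B = {P', Q'}" using card_subset_eq[OF _ BS] cPQ' cB2 by simp
  have PQ: "P \<noteq> Q" using cPQ by auto
  have PQ': "P' \<noteq> Q'" using cPQ' by auto
  have "P \<in> A" using AE by simp
  then have Pa: "(sqrt a)^2 = a" unfolding A_def P_def a_def by (simp add: mem_ell)
  then have a0: "a \<ge> 0" by (metis zero_le_power2)
  have sa: "sqrt a \<noteq> 0" using PQ unfolding P_def Q_def by auto
  have "P' \<in> B" using BE by simp
  then have w0': "4*c^2 - a \<ge> 0" unfolding B_def a_def by (auto simp: mem_ell P'_def algebra_simps)
  have w0: "w \<noteq> 0" using PQ' unfolding P'_def Q'_def by auto
  define r where "r = sqrt a"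
  have ar: "a = r^2" using a0 unfolding r_def by simp
  have ww: "w^2 = 4*c^2 - r^2" using w0' ar unfolding w_def by simp
  have r0: "r \<noteq> 0" using sa r_def by simp
  have "w^2 \<noteq> 0" using w0 by simp
  then have wpos: "4*c^2 - r^2 \<noteq> 0" using ww by linarith
  have f1: "2*c - r \<noteq> 0"
  proof
    assume "2*c - r = 0"
    then have "r = 2*c" by simp
    with wpos show False by (simp add: power2_eq_square)
  qed
  have f2: "2*c + r \<noteq> 0"
  proof
    assume "2*c + r = 0"
    then have "r = -2*c" by simp
    with wpos show False by (simp add: power2_eq_square)
  qed
  have mP: "magnification (eta_ell c) P = 1/(-4*r^2 + 8*c*r)"
    by (simp add: magnification_def jac_ell P_def r_def[symmetric])
  have mQ: "magnification (eta_ell c) Q = 1/(-4*r^2 - 8*c*r)"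
    by (simp add: magnification_def jac_ell Q_def r_def[symmetric])
  have mP': "magnification (eta_ell c) P' = 1/(-4*w^2)"
    by (simp add: magnification_def jac_ell P'_def power2_eq_square)
  have mQ': "magnification (eta_ell c) Q' = 1/(-4*w^2)"
    by (simp add: magnification_def jac_ell Q'_def power2_eq_square)
  have "(\<Sum>x\<in>?S. magnification (eta_ell c) x) = (\<Sum>x\<in>A. magnification (eta_ell c) x) + (\<Sum>x\<in>B. magnification (eta_ell c) x)"
    unfolding SAB by (rule sum.union_disjoint[OF fA fB dis])
  also have "\<dots> = 1/(-4*r^2 + 8*c*r) + 1/(-4*r^2 - 8*c*r) + (1/(-4*w^2) + 1/(-4*w^2))"
    unfolding AE BE using PQ PQ' by (simp add: mP mQ mP' mQ')
  also have "\<dots> = 1/(-4*r^2 + 8*c*r) + 1/(-4*r^2 - 8*c*r) + 2 * (1/(-4*w^2))" by simp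
  also have "\<dots> = 1/(-4*r^2 + 8*c*r) + 1/(-4*r^2 - 8*c*r) + 2 * (1/(-4*(4*c^2 - r^2)))"
    unfolding ww ..
  also have "\<dots> = 0"
  proof -
    have e1: "-4*r^2 + 8*c*r = 4*r*(2*c - r)" and e2: "-4*r^2 - 8*c*r = -4*r*(2*c + r)"
      and e3: "-4*(4*c^2 - r^2) = -4*(2*c-r)*(2*c+r)" by (simp_all add: algebra_simps power2_eq_square)
    have "1/(4*r*(2*c - r)) + 1/(-4*r*(2*c + r)) + 2*(1/(-4*(2*c-r)*(2*c+r))) = 0"
    proof (rule aux[OF r0 f1 f2])
      show "(2*c + r) - (2*c - r) = 2*r" by simp
    qed
    then show ?thesis unfolding e1 e2 e3 .
  qed
  finally show ?thesis .
qed

theorem theorem8p1: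
  fixes c :: real and y :: "real^2"
  shows "(card {x. eta_ell c x = y} = 4 \<and> (\<forall>x\<in>{x. eta_ell c x = y}. jacdet (eta_ell c) x \<noteq> 0)
           \<longrightarrow> (\<Sum>x\<in>{x. eta_ell c x = y}. magnification (eta_ell c) x) = 0)
       \<and> (card {x. eta_hyp c x = y} = 4 \<and> (\<forall>x\<in>{x. eta_hyp c x = y}. jacdet (eta_hyp c) x \<noteq> 0)
           \<longrightarrow> (\<Sum>x\<in>{x. eta_hyp c x = y}. magnification (eta_hyp c) x) = 0)"
proof (intro conjI impI)
  assume h: "card {x. eta_ell c x = y} = 4 \<and> (\<forall>x\<in>{x. eta_ell c x = y}. jacdet (eta_ell c) x \<noteq> 0)"
  show "(\<Sum>x\<in>{x. eta_ell c x = y}. magnification (eta_ell c) x) = 0"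
  proof (cases "y$2 = 0")
    case True
    show ?thesis by (rule ell_deg[OF conjunct1[OF h] True])
  next
    case False
    show ?thesis by (rule ell_gen[OF conjunct1[OF h] conjunct2[OF h] False])
  qed
next
  assume h: "card {x. eta_hyp c x = y} = 4 \<and> (\<forall>x\<in>{x. eta_hyp c x = y}. jacdet (eta_hyp c) x \<noteq> 0)"
  show "(\<Sum>x\<in>{x. eta_hyp c x = y}. magnification (eta_hyp c) x) = 0"
  proof (cases "c = 0")
    case True
    show ?thesis unfolding True by (rule hyp_deg)
  next
    case False
    show ?thesis by (rule hyp_gen[OF conjunct1[OF h] conjunct2[OF h] False])
  qed
qed
end
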